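(* Consider the classical system--heat bath model described in the context, with all standing assumptions of the context. Assume that for each $t>0$ there is a constant $C$ with $\sup_{0\le s\le t}(\mathbb E[|\dot P_s|^2])^{1/2}+\sup_{0\le s\le t}(\mathbb E[|\dot X_s|^2])^{1/2}\le C$, and that $\lambda$ is three times continuously differentiable with $\sup_X\|{\rm D}^2\lambda(X)\|+\sup_X\|{\rm D}^3\lambda(X)\|<\infty$. Then for each $t>0$ there is a constant $C$ such that \[ \sup_{0\le s\le t}\mathbb E\big[|X_s|^2+|P_s|^2+|\dot P_s|^2\big]\le C\big(1+e^{Ct^4}\big). \]
   Context: Setting. Let $N\ge1$, let $\bar n$ be an even positive integer and $n=\bar n^3$; let $T>0$ and $m>0$. The heat bath coordinates $x=(x_j)_{j\in E_{\bar n}}\in\mathbb R^n$ are indexed by the periodic lattice $E_{\bar n}=\{-\bar n/2,\dots,\bar n/2-1\}^3$ (indices modulo $\bar n$), $e_1,e_2,e_3$ the unit lattice vectors. The symmetric positive definite $n\times n$ matrix $\bar V''$ is defined by $\langle \bar V''y,y\rangle=c^2\sum_{i=1}^3\sum_{j}|y_{j+e_i}-y_j|^2+\eta_n^2\sum_{i=1}^3\sum_{j}|y_{j+e_i}|^2$, with $c>0$ independent of $n$ and $\eta_n>0$, $\eta_n\to0$, $n^{1/2}\eta_n\to\infty$ as $n\to\infty$; $\langle u,w\rangle=\sum_ju_j^*w_j$. Let $\lambda:\mathbb R^N\to\mathbb R$ and let $a:\mathbb R^N\to\mathbb R^n$ be affine ($\nabla a$ constant). The coupled system has Hamiltonian $H(X,P,x,p)=\frac{|P|^2}{2}+\frac{|p|^2}{2m}+\lambda(X)+\frac12\langle\bar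 V''(x-a(X)),x-a(X)\rangle$ and $(X_t,P_t,x_t,p_t)$ solves the associated Hamilton equations. Given $(X_0,P_0)$, the initial bath data are independent with $p_0\sim N(0,mT{\rm I})$ and $x_0\sim N(a(X_0),T(\bar V'')^{-1})$. Force derivatives $F'_{\ell,j}:=(\bar V''\partial_{X^\ell}a)_j$ satisfy $\sum_j|F'_{\ell,j}|(1+|j-\hat\ell|^2)=\mathcal O(1)$ as $n\to\infty$ with $\hat\ell={\rm argmin}_j|X_\ell-x_j|$, and $\bar F_{\ell,j}:=\lim_{n\to\infty}F'_{\ell,j}$ exist. With $\beta_\ell(\mathbf r):=\sum_{j\in\mathbb Z^3}\bar F_{\ell,j}e^{-2\pi{\rm i}j\cdot\mathbf r}$ viewed as a function of $\boldsymbol\omega\in[-2c,2c]^3$ via $\omega_i=\sqrt2c\sqrt{1-\cos(2\pi r_i)}\,{\rm sgn}(r_i)$, assume $\beta_\ell$ is twice differentiable in $\boldsymbol\omega$ and vanishes for $|\boldsymbol\omega|>c$. *)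

theory Defs
  imports "HOL-Probability.Probability"
begin

type_synonym site = "int \<times> int \<times> int"

definition lattice :: "nat \<Rightarrow> site set" where
  "lattice nb = (let h = int nb div 2 in {-h..h-1} \<times> {-h..h-1} \<times> {-h..h-1})"

definition wrap :: "nat \<Rightarrow> int \<Rightarrow> int" where
  "wrap nb z = ((z + int nb div 2) mod int nb) - int nb div 2"

definition shift :: "nat \<Rightarrow> nat \<Rightarrow> int \<Rightarrow> site \<Rightarrow> site" where
  "shift nb i s j = (case j of (j1, j2, j3) \<Rightarrow>
     (if i = 1 then (wrap nb (j1 + s), j2, j3)
      else if i = 2 then (j1, wrap nb (j2 + s), j3)
      else (j1, j2, wrap nb (j3 + s))))"

definition Vform :: "nat \<Rightarrow> real \<Rightarrow> real \<Rightarrow> (site \<Rightarrow> real) \<Rightarrow> real" where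
  "Vform nb c eta y = c\<^sup>2 * (\<Sum>i\<in>{1,2,3}. \<Sum>j\<in>lattice nb. (y (shift nb i 1 j) - y j)\<^sup>2)
     + eta\<^sup>2 * (\<Sum>i\<in>{1,2,3}. \<Sum>j\<in>lattice nb. (y (shift nb i 1 j))\<^sup>2)"

text \<open>The symmetric matrix V'' whose quadratic form is Vform, acting on lattice vectors:
  (V'' y)_j = c^2 sum_i (2 y_j - y_{j+e_i} - y_{j-e_i}) + 3 eta^2 y_j.\<close>
definition Vop :: "nat \<Rightarrow> real \<Rightarrow> real \<Rightarrow> (site \<Rightarrow> real) \<Rightarrow> site \<Rightarrow> real" where
  "Vop nb c eta y j = c\<^sup>2 * (\<Sum>i\<in>{1,2,3}. 2 * y j - y (shift nb i 1 j) - y (shift nb i (-1) j))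
     + 3 * eta\<^sup>2 * y j"

text \<open>Non-degenerate Gaussian on R^S given by the (positive definite) quadratic form
  Q(y) = <Sigma^{-1} (y - mu), y - mu>: density proportional to exp(-Q/2).\<close>
definition gaussian :: "site set \<Rightarrow> ((site \<Rightarrow> real) \<Rightarrow> real) \<Rightarrow> (site \<Rightarrow> real) measure" where
  "gaussian S Q = density (PiM S (\<lambda>_. lborel))
     (\<lambda>y. ennreal (exp (- Q y / 2)) /
          (\<integral>\<^sup>+ z. ennreal (exp (- Q z / 2)) \<partial>PiM S (\<lambda>_. lborel)))"

text \<open>Law of the initial bath data (x_0, p_0): independent,
  x_0 ~ N(a(X_0), T (V'')^{-1}),  p_0 ~ N(0, m T I).\<close>
definition bath_init :: "nat \<Rightarrow> real \<Rightarrow> real \<Rightarrow> real \<Rightarrow> real \<Rightarrow> (site \<Rightarrow> real)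
    \<Rightarrow> ((site \<Rightarrow> real) \<times> (site \<Rightarrow> real)) measure" where
  "bath_init nb c eta T m mu =
     gaussian (lattice nb) (\<lambda>y. Vform nb c eta (\<lambda>j. y j - mu j) / T)
     \<Otimes>\<^sub>M gaussian (lattice nb) (\<lambda>y. (\<Sum>j\<in>lattice nb. (y j)\<^sup>2) / (m * T))"

definition esqrt :: "ennreal \<Rightarrow> ennreal" where
  "esqrt x = (if x = \<infinity> then \<infinity> else ennreal (sqrt (enn2real x)))"

definition omega1 :: "real \<Rightarrow> real \<Rightarrow> real" where
  "omega1 c r = sqrt 2 * c * sqrt (1 - cos (2 * pi * r)) * sgn r"

definition omega :: "real \<Rightarrow> real \<times> real \<times> real \<Rightarrow> real \<times> real \<times> real" where
  "omega c r = (case r of (r1, r2, r3) \<Rightarrow> (omega1 c r1, omega1 c r2, omega1 c r3))"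

definition dotZ :: "site \<Rightarrow> real \<times> real \<times> real \<Rightarrow> real" where
  "dotZ j r = (case j of (j1, j2, j3) \<Rightarrow> case r of (r1, r2, r3) \<Rightarrow>
       of_int j1 * r1 + of_int j2 * r2 + of_int j3 * r3)"

definition sitedist2 :: "site \<Rightarrow> site \<Rightarrow> real" where
  "sitedist2 j l = (case j of (j1, j2, j3) \<Rightarrow> case l of (l1, l2, l3) \<Rightarrow>
       of_int ((j1 - l1)\<^sup>2 + (j2 - l2)\<^sup>2 + (j3 - l3)\<^sup>2))"

definition twice_differentiable_on ::
  "('a::real_normed_vector \<Rightarrow> 'b::real_normed_vector) \<Rightarrow> 'a set \<Rightarrow> bool" where
  "twice_differentiable_on g S \<longleftrightarrow> (\<exists>g' g''.
     (\<forall>w\<in>S. (g has_derivative g' w) (at w within S)) \<and>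
     (\<forall>w\<in>S. \<forall>u. ((\<lambda>v. g' v u) has_derivative g'' w u) (at w within S)))"

end

theory Submission
  imports Defs
begin

lemma Dl_lip:
  fixes Dl :: "'a::{real_normed_vector,perfect_space} \<Rightarrow> 'a \<Rightarrow> real"
  assumes D2: "\<forall>Y u. ((\<lambda>Z. Dl Z u) has_derivative D2l Y u) (at Y)"
    and Bd: "\<forall>Y u v. \<bar>D2l Y u v\<bar> \<le> B * norm u * norm v"
  shows "\<bar>Dl Y u - Dl Z u\<bar> \<le> B * norm u * norm (Y - Z)"
proof -
  have "norm ((\<lambda>Z. Dl Z u) Y - (\<lambda>Z. Dl Z u) Z) \<le> (B * norm u) * norm (Y - Z)"
  proof (rule differentiable_bound[where S=UNIV and f' = "\<lambda>Y. D2l Y u"])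
    show "((\<lambda>Z. Dl Z u) has_derivative D2l x u) (at x within UNIV)" for x using D2 by simp
    show "onorm (D2l x u) \<le> B * norm u" for x
      by (rule onorm_le) (use Bd in \<open>auto simp: mult.assoc\<close>)
  qed auto
  then show ?thesis by simp
qed

lemma term_le_sum:
  assumes "finite S" "j \<in> S" "\<forall>i\<in>S. f i \<ge> (0::real)"
  shows "f j \<le> sum f S"
  by (rule member_le_sum) (use assms in auto)

lemma alg_bound:
  fixes dX dP dF :: "real ^ 'N::finite" and dx dp dV :: "site \<Rightarrow> real"
  assumes S: "finite S" and m: "m > 0" and KF: "KF \<ge> 0" and KV: "KV \<ge> 0"
    and D: "D = norm dX ^ 2 + norm dP ^ 2 + (\<Sum>j\<in>S. (dx j)^2) + (\<Sum>j\<in>S. (dp j)^2)"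
    and hF: "norm dF \<le> KF * sqrt D"
    and hV: "\<forall>j\<in>S. \<bar>dV j\<bar> \<le> KV * sqrt D"
  shows "2 * (dX \<bullet> dP) + 2 * (dP \<bullet> dF) + (\<Sum>j\<in>S. 2 * dx j * (dp j / m))
          + (\<Sum>j\<in>S. 2 * dp j * (- dV j))
         \<le> (2 + 2 * KF + 2 * real (card S) / m + 2 * real (card S) * KV) * D"
proof -
  define r where "r = sqrt D"
  have s1: "(\<Sum>j\<in>S. (dx j)^2) \<ge> 0" "(\<Sum>j\<in>S. (dp j)^2) \<ge> 0" by (auto intro: sum_nonneg)
  have D0: "D \<ge> 0" unfolding D using s1 by (intro add_nonneg_nonneg) auto
  have rr: "r * r = D" unfolding r_def using D0 by simp
  have r0: "r \<ge> 0" unfolding r_def using D0 by simp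
  have nX: "norm dX \<le> r" unfolding r_def by (rule real_le_rsqrt) (use D s1 in simp)
  have nP: "norm dP \<le> r" unfolding r_def by (rule real_le_rsqrt) (use D s1 in simp)
  have nx: "\<bar>dx j\<bar> \<le> r" if "j \<in> S" for j
  proof -
    have "(dx j)^2 \<le> (\<Sum>j\<in>S. (dx j)^2)" by (rule term_le_sum) (use S that in auto)
    then have "(dx j)^2 \<le> D" using D s1 zero_le_power2[of "norm dX"] zero_le_power2[of "norm dP"] by linarith
    then show ?thesis unfolding r_def by (intro real_le_rsqrt) simp
  qed
  have np: "\<bar>dp j\<bar> \<le> r" if "j \<in> S" for j
  proof -
    have "(dp j)^2 \<le> (\<Sum>j\<in>S. (dp j)^2)" by (rule term_le_sum) (use S that in auto)
    then have "(dp j)^2 \<le> D" using D s1 zero_le_power2[of "norm dX"] zero_le_power2[of "norm dP"] by linarith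
    then show ?thesis unfolding r_def by (intro real_le_rsqrt) simp
  qed
  have t1: "dX \<bullet> dP \<le> r * r"
    by (rule order_trans[OF norm_cauchy_schwarz]) (intro mult_mono nX nP; simp add: r0)
  have t2: "dP \<bullet> dF \<le> r * (KF * r)"
    by (rule order_trans[OF norm_cauchy_schwarz]) (intro mult_mono nP; use hF r_def r0 in simp)
  have t3: "(\<Sum>j\<in>S. 2 * dx j * (dp j / m)) \<le> (\<Sum>j\<in>S. 2 * (r * r) / m)"
  proof (rule sum_mono)
    fix j assume j: "j \<in> S"
    have "dx j * dp j \<le> \<bar>dx j\<bar> * \<bar>dp j\<bar>" by (metis abs_ge_self abs_mult)
    also have "\<dots> \<le> r * r" by (intro mult_mono nx np j) (auto simp: r0)
    finally show "2 * dx j * (dp j / m) \<le> 2 * (r * r) / m" using m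
      by (simp add: divide_right_mono)
  qed
  have t4: "(\<Sum>j\<in>S. 2 * dp j * (- dV j)) \<le> (\<Sum>j\<in>S. 2 * (r * (KV * r)))"
  proof (rule sum_mono)
    fix j assume j: "j \<in> S"
    have "dp j * (- dV j) \<le> \<bar>dp j\<bar> * \<bar>dV j\<bar>" by (metis abs_ge_self abs_minus_cancel abs_mult)
    also have "\<dots> \<le> r * (KV * r)" by (intro mult_mono np j) (use hV j r_def r0 in auto)
    finally show "2 * dp j * (- dV j) \<le> 2 * (r * (KV * r))" by (simp add: algebra_simps)
  qed
  have "2 * (dX \<bullet> dP) + 2 * (dP \<bullet> dF) + (\<Sum>j\<in>S. 2 * dx j * (dp j / m))
          + (\<Sum>j\<in>S. 2 * dp j * (- dV j))
       \<le> 2 * (r * r) + 2 * (r * (KF * r)) + (\<Sum>j\<in>S. 2 * (r * r) / m) + (\<Sum>j\<in>S. 2 * (r * (KV * r)))"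
    using t1 t2 t3 t4 by linarith
  also have "\<dots> = (2 + 2 * KF + 2 * real (card S) / m + 2 * real (card S) * KV) * D"
    unfolding rr[symmetric] by (simp add: algebra_simps)
  finally show ?thesis .
qed

lemma shift_in:
  assumes "k \<ge> 1" "j \<in> lattice (2*k)"
  shows "Defs.shift (2*k) i d j \<in> lattice (2*k)"
proof -
  have w: "wrap (2*k) z \<in> {- int k .. int k - 1}" for z
    unfolding wrap_def using assms(1) by auto
  have h: "int (2*k) div 2 = int k" by simp
  obtain a b c where j: "j = (a,b,c)" by (cases j) auto
  show ?thesis using assms w unfolding lattice_def Defs.shift_def Let_def h j
    by (auto simp del: of_nat_mult)
qed

lemma finite_lattice: "finite (lattice nb)"
  unfolding lattice_def Let_def by auto

lemma abs3: "\<bar>a\<bar> \<le> K \<Longrightarrow> \<bar>b\<bar> \<le> K \<Longrightarrow> \<bar>c\<bar> \<le> K \<Longrightarrow> \<bar>2 * a - b - c\<bar> \<le> 4 * (K::real)"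
  by arith

lemma V_bound:
  assumes k: "k \<ge> 1" and j: "j \<in> lattice (2*k)"
    and dy: "\<forall>i\<in>lattice (2*k). \<bar>y1 i - y2 i\<bar> \<le> K1 * r"
  shows "\<bar>Vop (2*k) cc e y1 j - Vop (2*k) cc e y2 j\<bar> \<le> (12 * cc^2 + 3 * e^2) * (K1 * r)"
proof -
  let ?S = "lattice (2*k)"
  let ?d = "\<lambda>i. y1 i - y2 i"
  have sh: "\<And>i d. \<bar>?d (Defs.shift (2*k) i d j)\<bar> \<le> K1 * r" using dy shift_in[OF k j] by blast
  have dj: "\<bar>?d j\<bar> \<le> K1 * r" using dy j by blast
  define T where "T = (\<Sum>i\<in>{1::nat,2,3}. 2 * ?d j - ?d (Defs.shift (2*k) i 1 j) - ?d (Defs.shift (2*k) i (-1) j))"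
  have eq: "Vop (2*k) cc e y1 j - Vop (2*k) cc e y2 j = cc^2 * T + 3 * e^2 * ?d j"
    unfolding Vop_def T_def by (simp add: algebra_simps)
  have "\<bar>T\<bar> \<le> (\<Sum>i\<in>{1::nat,2,3}. 4 * (K1 * r))"
    unfolding T_def
  proof (rule order_trans[OF sum_abs], rule sum_mono)
    fix i :: nat
    show "\<bar>2 * ?d j - ?d (Defs.shift (2*k) i 1 j) - ?d (Defs.shift (2*k) i (-1) j)\<bar> \<le> 4 * (K1 * r)"
      using abs3[OF dj sh[of i 1] sh[of i "-1"]] .
  qed
  moreover have "(\<Sum>i\<in>{1::nat,2,3}. 4 * (K1 * r)) = 12 * (K1 * r)" by simp
  ultimately have s: "\<bar>T\<bar> \<le> 12 * (K1 * r)" by linarith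
  have "\<bar>cc^2 * T + 3 * e^2 * ?d j\<bar> \<le> cc^2 * \<bar>T\<bar> + 3 * e^2 * \<bar>?d j\<bar>"
    by (rule order_trans[OF abs_triangle_ineq]) (simp add: abs_mult)
  also have "\<dots> \<le> cc^2 * (12 * (K1 * r)) + 3 * e^2 * (K1 * r)"
    by (intro add_mono mult_left_mono s dj) auto
  finally show ?thesis unfolding eq by (simp add: algebra_simps)
qed

lemma Y_bound:
  fixes Xa Xb :: "real ^ 'N::finite" and Da :: "'N \<Rightarrow> site \<Rightarrow> real"
  assumes S: "finite S" and i: "i \<in> S" and r: "r \<ge> 0"
    and nX: "norm (Xa - Xb) \<le> r" and nx: "\<forall>i\<in>S. \<bar>xa i - xb i\<bar> \<le> r"
  shows "\<bar>(xa i - (a0 i + (\<Sum>l'\<in>UNIV. Xa $ l' * Da l' i))) - (xb i - (a0 i + (\<Sum>l'\<in>UNIV. Xb $ l' * Da l' i)))\<bar>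
    \<le> (1 + (\<Sum>i\<in>S. \<Sum>l'\<in>UNIV. \<bar>Da l' i\<bar>)) * r"
proof -
  have e: "(xa i - (a0 i + (\<Sum>l'\<in>UNIV. Xa $ l' * Da l' i))) - (xb i - (a0 i + (\<Sum>l'\<in>UNIV. Xb $ l' * Da l' i)))
     = (xa i - xb i) - (\<Sum>l'\<in>UNIV. (Xa - Xb) $ l' * Da l' i)"
    by (simp add: algebra_simps sum_subtractf)
  have "\<bar>\<Sum>l'\<in>UNIV. (Xa - Xb) $ l' * Da l' i\<bar> \<le> (\<Sum>l'\<in>UNIV. r * \<bar>Da l' i\<bar>)"
  proof (rule order_trans[OF sum_abs], rule sum_mono)
    fix l' :: 'N
    have "\<bar>(Xa - Xb) $ l'\<bar> \<le> r" using component_le_norm_cart[of "Xa - Xb" l'] nX by linarith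
    then show "\<bar>(Xa - Xb) $ l' * Da l' i\<bar> \<le> r * \<bar>Da l' i\<bar>" by (simp add: abs_mult mult_right_mono)
  qed
  also have "\<dots> = r * (\<Sum>l'\<in>UNIV. \<bar>Da l' i\<bar>)" by (simp add: sum_distrib_left)
  also have "\<dots> \<le> r * (\<Sum>i\<in>S. \<Sum>l'\<in>UNIV. \<bar>Da l' i\<bar>)"
    by (intro mult_left_mono r member_le_sum[OF i] sum_nonneg S) auto
  finally have "\<bar>\<Sum>l'\<in>UNIV. (Xa - Xb) $ l' * Da l' i\<bar> \<le> r * (\<Sum>i\<in>S. \<Sum>l'\<in>UNIV. \<bar>Da l' i\<bar>)" .
  moreover have "\<bar>xa i - xb i\<bar> \<le> r" using nx i by blast
  moreover have "(1 + (\<Sum>i\<in>S. \<Sum>l'\<in>UNIV. \<bar>Da l' i\<bar>)) * r = r + r * (\<Sum>i\<in>S. \<Sum>l'\<in>UNIV. \<bar>Da l' i\<bar>)"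
    by (simp add: algebra_simps)
  ultimately show ?thesis unfolding e
    using abs_triangle_ineq4[of "xa i - xb i" "\<Sum>l'\<in>UNIV. (Xa - Xb) $ l' * Da l' i"] by linarith
qed

definition Ycoord :: "(site \<Rightarrow> real) \<Rightarrow> ('N::finite \<Rightarrow> site \<Rightarrow> real) \<Rightarrow> real ^ 'N \<Rightarrow> (site \<Rightarrow> real) \<Rightarrow> site \<Rightarrow> real"
  where "Ycoord a0 Da Xv xv = (\<lambda>i. xv i - (a0 i + (\<Sum>l'\<in>UNIV. Xv $ l' * Da l' i)))"

definition Fvec :: "nat \<Rightarrow> real \<Rightarrow> real \<Rightarrow> (real ^ 'N \<Rightarrow> real ^ 'N \<Rightarrow> real) \<Rightarrow> (site \<Rightarrow> real)
   \<Rightarrow> ('N::finite \<Rightarrow> site \<Rightarrow> real) \<Rightarrow> real ^ 'N \<Rightarrow> (site \<Rightarrow> real) \<Rightarrow> real ^ 'N"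
  where "Fvec nb cc e Dl a0 Da Xv xv = (\<chi> l. - Dl Xv (axis l 1) +
                  (\<Sum>j\<in>lattice nb. Da l j * Vop nb cc e (Ycoord a0 Da Xv xv) j))"

lemma VY_bound:
  fixes Xa Xb :: "real ^ 'N::finite" and Da :: "'N \<Rightarrow> site \<Rightarrow> real"
  assumes k: "k \<ge> 1" and j: "j \<in> lattice (2*k)" and r: "r \<ge> 0"
    and nX: "norm (Xa - Xb) \<le> r" and nx: "\<forall>i\<in>lattice (2*k). \<bar>xa i - xb i\<bar> \<le> r"
  shows "\<bar>Vop (2*k) cc e (Ycoord a0 Da Xa xa) j - Vop (2*k) cc e (Ycoord a0 Da Xb xb) j\<bar>
     \<le> ((12 * cc^2 + 3 * e^2) * (1 + (\<Sum>i\<in>lattice (2*k). \<Sum>l'\<in>UNIV. \<bar>Da l' i\<bar>))) * r"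
proof -
  have "\<bar>Vop (2*k) cc e (Ycoord a0 Da Xa xa) j - Vop (2*k) cc e (Ycoord a0 Da Xb xb) j\<bar>
     \<le> (12 * cc^2 + 3 * e^2) * ((1 + (\<Sum>i\<in>lattice (2*k). \<Sum>l'\<in>UNIV. \<bar>Da l' i\<bar>)) * r)"
  proof (rule V_bound[OF k j], intro ballI)
    fix i assume i: "i \<in> lattice (2*k)"
    show "\<bar>Ycoord a0 Da Xa xa i - Ycoord a0 Da Xb xb i\<bar> \<le> (1 + (\<Sum>i\<in>lattice (2*k). \<Sum>l'\<in>UNIV. \<bar>Da l' i\<bar>)) * r"
      unfolding Ycoord_def using Y_bound[OF finite_lattice i r nX nx] by simp
  qed
  then show ?thesis by (simp add: mult.assoc)
qed

lemma F_bound: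
  fixes Xa Xb :: "real ^ 'N::finite" and Da :: "'N \<Rightarrow> site \<Rightarrow> real"
  assumes k: "k \<ge> 1" and r: "r \<ge> 0"
    and nX: "norm (Xa - Xb) \<le> r" and nx: "\<forall>i\<in>lattice (2*k). \<bar>xa i - xb i\<bar> \<le> r"
    and Dlip: "\<forall>Y Z u. \<bar>Dl Y u - Dl Z u\<bar> \<le> B * norm u * norm (Y - Z)"
  shows "norm (Fvec (2*k) cc e Dl a0 Da Xa xa - Fvec (2*k) cc e Dl a0 Da Xb xb)
     \<le> (\<Sum>l\<in>UNIV. \<bar>B\<bar> + ((12 * cc^2 + 3 * e^2) * (1 + (\<Sum>i\<in>lattice (2*k). \<Sum>l'\<in>UNIV. \<bar>Da l' i\<bar>)))
            * (\<Sum>j\<in>lattice (2*k). \<bar>Da l j\<bar>)) * r"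
proof -
  define KV where "KV = (12 * cc^2 + 3 * e^2) * (1 + (\<Sum>i\<in>lattice (2*k). \<Sum>l'\<in>UNIV. \<bar>Da l' i\<bar>))"
  have V: "\<bar>Vop (2*k) cc e (Ycoord a0 Da Xa xa) j - Vop (2*k) cc e (Ycoord a0 Da Xb xb) j\<bar> \<le> KV * r"
    if "j \<in> lattice (2*k)" for j
    unfolding KV_def by (rule VY_bound[OF k that r nX nx])
  have comp: "\<bar>(Fvec (2*k) cc e Dl a0 Da Xa xa - Fvec (2*k) cc e Dl a0 Da Xb xb) $ l\<bar>
     \<le> (\<bar>B\<bar> + KV * (\<Sum>j\<in>lattice (2*k). \<bar>Da l j\<bar>)) * r" for l
  proof -
    have e: "(Fvec (2*k) cc e Dl a0 Da Xa xa - Fvec (2*k) cc e Dl a0 Da Xb xb) $ l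
      = - (Dl Xa (axis l 1) - Dl Xb (axis l 1)) +
        (\<Sum>j\<in>lattice (2*k). Da l j * (Vop (2*k) cc e (Ycoord a0 Da Xa xa) j - Vop (2*k) cc e (Ycoord a0 Da Xb xb) j))"
      unfolding Fvec_def by (simp add: algebra_simps sum_subtractf)
    have b1: "\<bar>Dl Xa (axis l 1) - Dl Xb (axis l 1)\<bar> \<le> \<bar>B\<bar> * r"
    proof -
      have "\<bar>Dl Xa (axis l 1) - Dl Xb (axis l 1)\<bar> \<le> B * norm (axis l (1::real)) * norm (Xa - Xb)"
        using Dlip by blast
      also have "\<dots> \<le> \<bar>B\<bar> * r"
      proof -
        have "B * norm (Xa - Xb) \<le> \<bar>B\<bar> * norm (Xa - Xb)" by (simp add: mult_right_mono)
        also have "\<dots> \<le> \<bar>B\<bar> * r" using nX by (simp add: mult_left_mono)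
        finally show ?thesis by simp
      qed
      finally show ?thesis .
    qed
    have b2: "\<bar>\<Sum>j\<in>lattice (2*k). Da l j * (Vop (2*k) cc e (Ycoord a0 Da Xa xa) j - Vop (2*k) cc e (Ycoord a0 Da Xb xb) j)\<bar>
       \<le> (\<Sum>j\<in>lattice (2*k). \<bar>Da l j\<bar> * (KV * r))"
      by (rule order_trans[OF sum_abs], rule sum_mono) (auto simp: abs_mult intro!: mult_left_mono V)
    have "(\<Sum>j\<in>lattice (2*k). \<bar>Da l j\<bar> * (KV * r)) = KV * (\<Sum>j\<in>lattice (2*k). \<bar>Da l j\<bar>) * r"
      by (simp add: sum_distrib_left sum_distrib_right algebra_simps)
    then show ?thesis unfolding e using b1 b2 abs_triangle_ineq[of "- (Dl Xa (axis l 1) - Dl Xb (axis l 1))"]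
      by (simp add: algebra_simps) linarith?
  qed
  have "norm (Fvec (2*k) cc e Dl a0 Da Xa xa - Fvec (2*k) cc e Dl a0 Da Xb xb)
     \<le> (\<Sum>l\<in>UNIV. \<bar>(Fvec (2*k) cc e Dl a0 Da Xa xa - Fvec (2*k) cc e Dl a0 Da Xb xb) $ l\<bar>)"
    by (rule norm_le_l1_cart)
  also have "\<dots> \<le> (\<Sum>l\<in>UNIV. (\<bar>B\<bar> + KV * (\<Sum>j\<in>lattice (2*k). \<bar>Da l j\<bar>)) * r)"
    by (rule sum_mono) (rule comp)
  finally show ?thesis unfolding KV_def by (simp add: sum_distrib_right)
qed

lemma gronwall_simple:
  fixes D D' :: "real \<Rightarrow> real"
  assumes d: "\<forall>s\<ge>0. (D has_real_derivative D' s) (at s within {0..})"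
    and b: "\<forall>s\<ge>0. D' s \<le> L * D s" and t: "t \<ge> 0"
  shows "D t \<le> exp (L*t) * D 0"
proof -
  define phi where "phi s = exp (- L * s) * D s" for s
  have dphi: "(phi has_real_derivative (exp (- L * s) * D' s + (- L * exp (- L * s)) * D s)) (at s within {0..})"
    if "s \<ge> 0" for s
    unfolding phi_def using d that
    by (auto intro!: derivative_eq_intros simp: algebra_simps)
  have "phi t \<le> phi 0"
  proof (rule DERIV_nonpos_imp_decreasing_open[OF t])
    fix x assume x: "0 < x" "x < t"
    have "at x within {0..} = at x" by (rule at_within_interior) (use x in simp)
    then have "(phi has_real_derivative (exp (- L * x) * D' x + (- L * exp (- L * x)) * D x)) (at x)"
      using dphi[of x] x by simp
    moreover have "exp (- L * x) * D' x + (- L * exp (- L * x)) * D x \<le> 0"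
    proof -
      have "exp (- L * x) * D' x \<le> exp (- L * x) * (L * D x)" using b x by (intro mult_left_mono) auto
      then show ?thesis by (simp add: algebra_simps)
    qed
    ultimately show "\<exists>y. (phi has_real_derivative y) (at x) \<and> y \<le> 0" by blast
  next
    show "continuous_on {0..t} phi"
    proof (rule continuous_on_subset[of "{0..}"])
      show "continuous_on {0..} phi" by (rule DERIV_continuous_on[OF dphi]) simp
    qed auto
  qed
  then have "exp (- L * t) * D t \<le> D 0" unfolding phi_def by simp
  then have "exp (L*t) * (exp (- L * t) * D t) \<le> exp (L*t) * D 0" by (intro mult_left_mono) auto
  then show ?thesis by (simp add: mult.assoc[symmetric] exp_add[symmetric])
qed

lemma hvd_norm2:
  fixes f :: "real \<Rightarrow> 'a::real_inner"
  assumes "(f has_vector_derivative f') (at t within T)"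
  shows "((\<lambda>s. norm (f s)^2) has_real_derivative 2 * (f t \<bullet> f')) (at t within T)"
proof -
  have "((\<lambda>s. f s \<bullet> f s) has_derivative (\<lambda>h. f t \<bullet> (h *\<^sub>R f') + (h *\<^sub>R f') \<bullet> f t)) (at t within T)"
    using assms unfolding has_vector_derivative_def by (intro has_derivative_inner)
  moreover have "(\<lambda>h. f t \<bullet> (h *\<^sub>R f') + (h *\<^sub>R f') \<bullet> f t) = (\<lambda>h. (2 * (f t \<bullet> f')) * h)"
    by (auto simp: inner_commute algebra_simps)
  ultimately show ?thesis unfolding has_field_derivative_def power2_norm_eq_inner by simp
qed

lemma comps_le:
  fixes dX dP :: "real ^ 'N::finite" and dx dp :: "site \<Rightarrow> real"
  assumes S: "finite S"
    and D: "D = norm dX ^ 2 + norm dP ^ 2 + (\<Sum>j\<in>S. (dx j)^2) + (\<Sum>j\<in>S. (dp j)^2)"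
  shows "norm dX \<le> sqrt D" "norm dP \<le> sqrt D" "\<forall>j\<in>S. \<bar>dx j\<bar> \<le> sqrt D" "\<forall>j\<in>S. \<bar>dp j\<bar> \<le> sqrt D"
    "D \<ge> 0"
proof -
  have s1: "(\<Sum>j\<in>S. (dx j)^2) \<ge> 0" "(\<Sum>j\<in>S. (dp j)^2) \<ge> 0" by (auto intro: sum_nonneg)
  show "D \<ge> 0" unfolding D using s1 by (intro add_nonneg_nonneg) auto
  show "norm dX \<le> sqrt D" by (rule real_le_rsqrt) (use D s1 in simp)
  show "norm dP \<le> sqrt D" by (rule real_le_rsqrt) (use D s1 in simp)
  show "\<forall>j\<in>S. \<bar>dx j\<bar> \<le> sqrt D"
  proof
    fix j assume j: "j \<in> S"
    have "(dx j)^2 \<le> (\<Sum>j\<in>S. (dx j)^2)" by (rule member_le_sum) (use S j in auto)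
    then have "(dx j)^2 \<le> D" using D s1 zero_le_power2[of "norm dX"] zero_le_power2[of "norm dP"] by linarith
    then show "\<bar>dx j\<bar> \<le> sqrt D" by (intro real_le_rsqrt) simp
  qed
  show "\<forall>j\<in>S. \<bar>dp j\<bar> \<le> sqrt D"
  proof
    fix j assume j: "j \<in> S"
    have "(dp j)^2 \<le> (\<Sum>j\<in>S. (dp j)^2)" by (rule member_le_sum) (use S j in auto)
    then have "(dp j)^2 \<le> D" using D s1 zero_le_power2[of "norm dX"] zero_le_power2[of "norm dP"] by linarith
    then show "\<bar>dp j\<bar> \<le> sqrt D" by (intro real_le_rsqrt) simp
  qed
qed

lemma deriv_sq:
  fixes f :: "real \<Rightarrow> real"
  assumes "(f has_real_derivative f') (at t within T)"
  shows "((\<lambda>s. (f s)^2) has_real_derivative 2 * f t * f') (at t within T)"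
  using assms by (auto intro!: derivative_eq_intros)

definition KVc :: "nat \<Rightarrow> real \<Rightarrow> real \<Rightarrow> ('N::finite \<Rightarrow> site \<Rightarrow> real) \<Rightarrow> real" where
  "KVc k cc e Da = (12 * cc^2 + 3 * e^2) * (1 + (\<Sum>i\<in>lattice (2*k). \<Sum>l'\<in>UNIV. \<bar>Da l' i\<bar>))"

definition KFc :: "nat \<Rightarrow> real \<Rightarrow> real \<Rightarrow> real \<Rightarrow> ('N::finite \<Rightarrow> site \<Rightarrow> real) \<Rightarrow> real" where
  "KFc k cc e B Da = (\<Sum>l\<in>UNIV. \<bar>B\<bar> + KVc k cc e Da * (\<Sum>j\<in>lattice (2*k). \<bar>Da l j\<bar>))"

definition Lc :: "nat \<Rightarrow> real \<Rightarrow> real \<Rightarrow> real \<Rightarrow> real \<Rightarrow> ('N::finite \<Rightarrow> site \<Rightarrow> real) \<Rightarrow> real" where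
  "Lc k cc e B m Da = 2 + 2 * KFc k cc e B Da + 2 * real (card (lattice (2*k))) / m
      + 2 * real (card (lattice (2*k))) * KVc k cc e Da"

lemma ode_stable:
  fixes Xa Xb Pa Pb :: "real \<Rightarrow> real ^ 'N::finite" and xa xb pa pb :: "real \<Rightarrow> site \<Rightarrow> real"
    and Da :: "'N \<Rightarrow> site \<Rightarrow> real"
  assumes k: "k \<ge> 1" and m: "m > 0"
    and Dlip: "\<forall>Y Z u. \<bar>Dl Y u - Dl Z u\<bar> \<le> B * norm u * norm (Y - Z)"
    and ha: "\<forall>t\<ge>0. (Xa has_vector_derivative Pa t) (at t within {0..}) \<and>
        (Pa has_vector_derivative Fvec (2*k) cc e Dl a0 Da (Xa t) (xa t)) (at t within {0..}) \<and>
        (\<forall>j\<in>lattice (2*k). ((\<lambda>s. xa s j) has_real_derivative pa t j / m) (at t within {0..}) \<and>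
           ((\<lambda>s. pa s j) has_real_derivative - Vop (2*k) cc e (Ycoord a0 Da (Xa t) (xa t)) j) (at t within {0..}))"
    and hb: "\<forall>t\<ge>0. (Xb has_vector_derivative Pb t) (at t within {0..}) \<and>
        (Pb has_vector_derivative Fvec (2*k) cc e Dl a0 Da (Xb t) (xb t)) (at t within {0..}) \<and>
        (\<forall>j\<in>lattice (2*k). ((\<lambda>s. xb s j) has_real_derivative pb t j / m) (at t within {0..}) \<and>
           ((\<lambda>s. pb s j) has_real_derivative - Vop (2*k) cc e (Ycoord a0 Da (Xb t) (xb t)) j) (at t within {0..}))"
    and t: "t \<ge> 0"
  shows "norm (Xa t - Xb t)^2 + norm (Pa t - Pb t)^2 + (\<Sum>j\<in>lattice (2*k). (xa t j - xb t j)^2)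
          + (\<Sum>j\<in>lattice (2*k). (pa t j - pb t j)^2)
      \<le> exp (Lc k cc e B m Da * t) * (norm (Xa 0 - Xb 0)^2 + norm (Pa 0 - Pb 0)^2
          + (\<Sum>j\<in>lattice (2*k). (xa 0 j - xb 0 j)^2) + (\<Sum>j\<in>lattice (2*k). (pa 0 j - pb 0 j)^2))"
proof -
  let ?S = "lattice (2*k)"
  define D where "D s = norm (Xa s - Xb s)^2 + norm (Pa s - Pb s)^2 + (\<Sum>j\<in>?S. (xa s j - xb s j)^2)
          + (\<Sum>j\<in>?S. (pa s j - pb s j)^2)" for s
  define dF where "dF s = Fvec (2*k) cc e Dl a0 Da (Xa s) (xa s) - Fvec (2*k) cc e Dl a0 Da (Xb s) (xb s)" for s
  define dV where "dV s j = Vop (2*k) cc e (Ycoord a0 Da (Xa s) (xa s)) j - Vop (2*k) cc e (Ycoord a0 Da (Xb s) (xb s)) j" for s j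
  define D' where "D' s = 2 * ((Xa s - Xb s) \<bullet> (Pa s - Pb s)) + 2 * ((Pa s - Pb s) \<bullet> dF s)
     + (\<Sum>j\<in>?S. 2 * (xa s j - xb s j) * ((pa s j - pb s j) / m))
     + (\<Sum>j\<in>?S. 2 * (pa s j - pb s j) * (- dV s j))" for s
  have KV0: "KVc k cc e Da \<ge> 0" unfolding KVc_def by (intro mult_nonneg_nonneg add_nonneg_nonneg sum_nonneg) auto
  have KF0: "KFc k cc e B Da \<ge> 0" unfolding KFc_def using KV0 by (intro sum_nonneg add_nonneg_nonneg mult_nonneg_nonneg sum_nonneg) auto
  have deriv: "(D has_real_derivative D' s) (at s within {0..})" if s: "s \<ge> 0" for s
  proof -
    from ha s have a1: "(Xa has_vector_derivative Pa s) (at s within {0..})"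
      and a2: "(Pa has_vector_derivative Fvec (2*k) cc e Dl a0 Da (Xa s) (xa s)) (at s within {0..})"
      and a3: "\<forall>j\<in>?S. ((\<lambda>s. xa s j) has_real_derivative pa s j / m) (at s within {0..}) \<and>
           ((\<lambda>s. pa s j) has_real_derivative - Vop (2*k) cc e (Ycoord a0 Da (Xa s) (xa s)) j) (at s within {0..})"
      by auto
    from hb s have b1: "(Xb has_vector_derivative Pb s) (at s within {0..})"
      and b2: "(Pb has_vector_derivative Fvec (2*k) cc e Dl a0 Da (Xb s) (xb s)) (at s within {0..})"
      and b3: "\<forall>j\<in>?S. ((\<lambda>s. xb s j) has_real_derivative pb s j / m) (at s within {0..}) \<and>
           ((\<lambda>s. pb s j) has_real_derivative - Vop (2*k) cc e (Ycoord a0 Da (Xb s) (xb s)) j) (at s within {0..})"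
      by auto
    have e1: "((\<lambda>s. norm (Xa s - Xb s)^2) has_real_derivative 2 * ((Xa s - Xb s) \<bullet> (Pa s - Pb s))) (at s within {0..})"
      by (rule hvd_norm2, rule has_vector_derivative_diff[OF a1 b1])
    have e2: "((\<lambda>s. norm (Pa s - Pb s)^2) has_real_derivative 2 * ((Pa s - Pb s) \<bullet> dF s)) (at s within {0..})"
      unfolding dF_def by (rule hvd_norm2, rule has_vector_derivative_diff[OF a2 b2])
    have e3: "((\<lambda>s. \<Sum>j\<in>?S. (xa s j - xb s j)^2) has_real_derivative
         (\<Sum>j\<in>?S. 2 * (xa s j - xb s j) * ((pa s j - pb s j) / m))) (at s within {0..})"
    proof (rule DERIV_sum)
      fix j assume j: "j \<in> ?S"
      have "((\<lambda>s. xa s j - xb s j) has_real_derivative (pa s j / m - pb s j / m)) (at s within {0..})"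
        using a3 b3 j by (intro DERIV_diff) auto
      from deriv_sq[OF this] show "((\<lambda>s. (xa s j - xb s j)^2) has_real_derivative
          2 * (xa s j - xb s j) * ((pa s j - pb s j) / m)) (at s within {0..})"
        by (simp add: diff_divide_distrib)
    qed
    have e4: "((\<lambda>s. \<Sum>j\<in>?S. (pa s j - pb s j)^2) has_real_derivative
         (\<Sum>j\<in>?S. 2 * (pa s j - pb s j) * (- dV s j))) (at s within {0..})"
    proof (rule DERIV_sum)
      fix j assume j: "j \<in> ?S"
      have "((\<lambda>s. pa s j - pb s j) has_real_derivative (- dV s j)) (at s within {0..})"
        using a3 b3 j unfolding dV_def by (auto intro!: DERIV_diff[THEN DERIV_cong])
      from deriv_sq[OF this] show "((\<lambda>s. (pa s j - pb s j)^2) has_real_derivative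
          2 * (pa s j - pb s j) * (- dV s j)) (at s within {0..})" .
    qed
    show ?thesis unfolding D_def D'_def
      by (intro DERIV_add e1 e2 e3 e4)
  qed
  have bound: "D' s \<le> Lc k cc e B m Da * D s" if s: "s \<ge> 0" for s
  proof -
    note c = comps_le[OF finite_lattice D_def]
    have hV: "\<forall>j\<in>?S. \<bar>dV s j\<bar> \<le> KVc k cc e Da * sqrt (D s)"
      unfolding dV_def KVc_def using VY_bound[OF k _ _ c(1)] c(3,5) by auto
    have hF: "norm (dF s) \<le> KFc k cc e B Da * sqrt (D s)"
      unfolding dF_def KFc_def KVc_def using F_bound[OF k _ c(1) _ Dlip] c(3,5) by auto
    show ?thesis unfolding D'_def Lc_def
      by (rule alg_bound[OF finite_lattice m KF0 KV0 D_def hF hV])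
  qed
  have "D t \<le> exp (Lc k cc e B m Da * t) * D 0"
    by (rule gronwall_simple[where D'=D']) (use deriv bound t in auto)
  then show ?thesis unfolding D_def .
qed

lemma cont_by_bound:
  fixes G :: "'a::t2_space \<Rightarrow> 'b::real_normed_vector"
  assumes "\<And>w0. \<exists>h. (\<forall>w. norm (G w - G w0) \<le> h w) \<and> isCont h w0 \<and> h w0 = 0"
  shows "continuous_on UNIV G"
proof (rule continuous_at_imp_continuous_on, intro ballI)
  fix w0 :: 'a
  obtain h where h: "\<forall>w. norm (G w - G w0) \<le> h w" "isCont h w0" "h w0 = 0" using assms by blast
  have hl: "(h \<longlongrightarrow> 0) (at w0)" using h(2,3) unfolding isCont_def by simp
  have ev: "eventually (\<lambda>w. norm (G w - G w0) \<le> h w) (at w0)"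
    using h(1) by (simp add: always_eventually)
  have "((\<lambda>w. G w - G w0) \<longlongrightarrow> 0) (at w0)"
    by (rule Lim_null_comparison[OF ev hl])
  then show "isCont G w0" unfolding isCont_def by (rule LIM_zero_cancel)
qed

lemma cont_coord: "continuous_on UNIV (\<lambda>w::(site \<Rightarrow> real) \<times> (site \<Rightarrow> real). fst w j)"
  "continuous_on UNIV (\<lambda>w::(site \<Rightarrow> real) \<times> (site \<Rightarrow> real). snd w j)"
  by (rule continuous_on_compose2[OF continuous_on_product_coordinates continuous_on_fst[OF continuous_on_id]], simp)
     (rule continuous_on_compose2[OF continuous_on_product_coordinates continuous_on_snd[OF continuous_on_id]], simp)

definition Qd :: "site set \<Rightarrow> (site \<Rightarrow> real) \<times> (site \<Rightarrow> real) \<Rightarrow> (site \<Rightarrow> real) \<times> (site \<Rightarrow> real) \<Rightarrow> real" where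
  "Qd S w w0 = (\<Sum>j\<in>S. (fst w j - fst w0 j)^2) + (\<Sum>j\<in>S. (snd w j - snd w0 j)^2)"

lemma Qd_cont: "continuous_on UNIV (\<lambda>w. Qd S w w0)"
  unfolding Qd_def by (intro continuous_intros cont_coord)

lemma h_ok:
  assumes "L' \<ge> 0"
  shows "isCont (\<lambda>w. sqrt (L' * Qd S w w0)) w0" "sqrt (L' * Qd S w0 w0) = 0"
proof -
  have "continuous_on UNIV (\<lambda>w. sqrt (L' * Qd S w w0))"
    by (intro continuous_intros Qd_cont)
  then show "isCont (\<lambda>w. sqrt (L' * Qd S w w0)) w0" by (metis continuous_on_eq_continuous_at open_UNIV UNIV_I)
  show "sqrt (L' * Qd S w0 w0) = 0" unfolding Qd_def by simp
qed

lemma cont_sol: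
  fixes X P :: "(site \<Rightarrow> real) \<times> (site \<Rightarrow> real) \<Rightarrow> real \<Rightarrow> real ^ 'N::finite"
    and x p :: "(site \<Rightarrow> real) \<times> (site \<Rightarrow> real) \<Rightarrow> real \<Rightarrow> site \<Rightarrow> real"
    and Da :: "'N \<Rightarrow> site \<Rightarrow> real"
  assumes k: "k \<ge> 1" and m: "m > 0"
    and Dlip: "\<forall>Y Z u. \<bar>Dl Y u - Dl Z u\<bar> \<le> B * norm u * norm (Y - Z)"
    and H: "\<forall>w. X w 0 = X0 \<and> P w 0 = P0 \<and> (\<forall>j\<in>lattice (2*k). x w 0 j = fst w j \<and> p w 0 j = snd w j) \<and>
       (\<forall>t\<ge>0. (X w has_vector_derivative P w t) (at t within {0..}) \<and>
        (P w has_vector_derivative Fvec (2*k) cc e Dl a0 Da (X w t) (x w t)) (at t within {0..}) \<and>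
        (\<forall>j\<in>lattice (2*k). ((\<lambda>s. x w s j) has_real_derivative p w t j / m) (at t within {0..}) \<and>
           ((\<lambda>s. p w s j) has_real_derivative - Vop (2*k) cc e (Ycoord a0 Da (X w t) (x w t)) j) (at t within {0..})))"
    and s: "s \<ge> 0"
  shows "continuous_on UNIV (\<lambda>w. X w s)" "continuous_on UNIV (\<lambda>w. P w s)"
    "\<forall>j\<in>lattice (2*k). continuous_on UNIV (\<lambda>w. x w s j)"
proof -
  let ?S = "lattice (2*k)"
  define L' where "L' = exp (Lc k cc e B m Da * s)"
  have L'0: "L' \<ge> 0" unfolding L'_def by simp
  define Dst where "Dst w w0 = norm (X w s - X w0 s)^2 + norm (P w s - P w0 s)^2 + (\<Sum>j\<in>?S. (x w s j - x w0 s j)^2)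
          + (\<Sum>j\<in>?S. (p w s j - p w0 s j)^2)" for w w0
  have Dle: "Dst w w0 \<le> L' * Qd ?S w w0" for w w0
  proof -
    have "Dst w w0 \<le> exp (Lc k cc e B m Da * s) * (norm (X w 0 - X w0 0)^2 + norm (P w 0 - P w0 0)^2
          + (\<Sum>j\<in>?S. (x w 0 j - x w0 0 j)^2) + (\<Sum>j\<in>?S. (p w 0 j - p w0 0 j)^2))"
      unfolding Dst_def
      by (rule ode_stable[OF k m Dlip _ _ s]) (use H in blast)+
    also have "(norm (X w 0 - X w0 0)^2 + norm (P w 0 - P w0 0)^2
          + (\<Sum>j\<in>?S. (x w 0 j - x w0 0 j)^2) + (\<Sum>j\<in>?S. (p w 0 j - p w0 0 j)^2)) = Qd ?S w w0"
      unfolding Qd_def using H[rule_format, of w] H[rule_format, of w0] by (simp cong: sum.cong)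
    finally show ?thesis unfolding L'_def .
  qed
  have sq: "sqrt (Dst w w0) \<le> sqrt (L' * Qd ?S w w0)" for w w0 using Dle by simp
  note c = comps_le[OF finite_lattice Dst_def]
  show "continuous_on UNIV (\<lambda>w. X w s)"
  proof (rule cont_by_bound)
    fix w0
    have "\<forall>w. norm (X w s - X w0 s) \<le> sqrt (L' * Qd ?S w w0)"
      using c(1) sq by (meson order_trans)
    then show "\<exists>h. (\<forall>w. norm (X w s - X w0 s) \<le> h w) \<and> isCont h w0 \<and> h w0 = 0"
      using h_ok[OF L'0, where S="?S" and ?w0.0=w0] by (intro exI[of _ "\<lambda>w. sqrt (L' * Qd ?S w w0)"]) auto
  qed
  show "continuous_on UNIV (\<lambda>w. P w s)"
  proof (rule cont_by_bound)
    fix w0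
    have "\<forall>w. norm (P w s - P w0 s) \<le> sqrt (L' * Qd ?S w w0)"
      using c(2) sq by (meson order_trans)
    then show "\<exists>h. (\<forall>w. norm (P w s - P w0 s) \<le> h w) \<and> isCont h w0 \<and> h w0 = 0"
      using h_ok[OF L'0, where S="?S" and ?w0.0=w0] by (intro exI[of _ "\<lambda>w. sqrt (L' * Qd ?S w w0)"]) auto
  qed
  show "\<forall>j\<in>?S. continuous_on UNIV (\<lambda>w. x w s j)"
  proof
    fix j assume j: "j \<in> ?S"
    show "continuous_on UNIV (\<lambda>w. x w s j)"
    proof (rule cont_by_bound)
      fix w0
      have "\<forall>w. norm (x w s j - x w0 s j) \<le> sqrt (L' * Qd ?S w w0)"
        using c(3) j sq unfolding real_norm_def by (meson order_trans)
      then show "\<exists>h. (\<forall>w. norm (x w s j - x w0 s j) \<le> h w) \<and> isCont h w0 \<and> h w0 = 0"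
        using h_ok[OF L'0, where S="?S" and ?w0.0=w0] by (intro exI[of _ "\<lambda>w. sqrt (L' * Qd ?S w w0)"]) auto
    qed
  qed
qed

lemma meas_coord_PiM:
  "(\<lambda>w::site \<Rightarrow> real. w i) \<in> borel_measurable (PiM S (\<lambda>_. lborel))"
proof (cases "i \<in> S")
  case True
  then have "(\<lambda>w::site \<Rightarrow> real. w i) \<in> measurable (PiM S (\<lambda>_. lborel)) lborel"
    by (rule measurable_component_singleton)
  then show ?thesis by (simp add: measurable_lborel1)
next
  case False
  have "w i = undefined" if "w \<in> space (PiM S (\<lambda>_. lborel))" for w :: "site \<Rightarrow> real"
    using that False unfolding space_PiM PiE_def extensional_def by blast
  then show ?thesis by (subst measurable_cong[where g="\<lambda>_. undefined"]) auto
qed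

lemma meas_id_gauss: "(\<lambda>w. w) \<in> borel_measurable (gaussian S Q)"
proof -
  have "(\<lambda>w::site \<Rightarrow> real. w) \<in> borel_measurable (PiM S (\<lambda>_. lborel))"
    by (rule measurable_coordinatewise_then_product) (rule meas_coord_PiM)
  then show ?thesis unfolding gaussian_def by simp
qed

lemma meas_id_bath: "(\<lambda>w. w) \<in> borel_measurable (bath_init nb cc e T m mu)"
proof -
  have "(\<lambda>w. (fst w, snd w)) \<in> measurable (bath_init nb cc e T m mu) (borel \<Otimes>\<^sub>M borel)"
    unfolding bath_init_def
    by (intro measurable_Pair measurable_compose[OF measurable_fst meas_id_gauss]
          measurable_compose[OF measurable_snd meas_id_gauss])
  then show ?thesis by (simp add: borel_prod)
qed

lemma meas_cont_bath:
  fixes G :: "(site \<Rightarrow> real) \<times> (site \<Rightarrow> real) \<Rightarrow> 'b::topological_space"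
  assumes "continuous_on UNIV G"
  shows "G \<in> borel_measurable (bath_init nb cc e T m mu)"
  using measurable_comp[OF meas_id_bath borel_measurable_continuous_onI[OF assms]] by (simp add: comp_def)

lemma step_bound:
  fixes f g :: "real \<Rightarrow> 'a::real_normed_vector"
  assumes ab: "a \<le> b" and d: "\<forall>v\<in>{a..b}. (f has_vector_derivative g v) (at v within {a..b})"
    and e: "\<forall>v\<in>{a..b}. norm (g v - g a) \<le> \<epsilon>"
  shows "norm (f b - f a - (b - a) *\<^sub>R g a) \<le> \<epsilon> * (b - a)"
proof -
  have lin: "((\<lambda>v. v *\<^sub>R g a) has_vector_derivative g a) (at v within {a..b})" for v
    unfolding has_vector_derivative_def by (auto intro!: derivative_eq_intros)
  have "norm ((\<lambda>v. f v - v *\<^sub>R g a) b - (\<lambda>v. f v - v *\<^sub>R g a) a) \<le> \<epsilon> * norm (b - a)"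
  proof (rule differentiable_bound[where S="{a..b}" and f'="\<lambda>v t. t *\<^sub>R (g v - g a)"])
    fix v assume v: "v \<in> {a..b}"
    have "((\<lambda>v. f v - v *\<^sub>R g a) has_vector_derivative (g v - g a)) (at v within {a..b})"
      by (rule has_vector_derivative_diff[OF d[rule_format, OF v] lin])
    then show "((\<lambda>v. f v - v *\<^sub>R g a) has_derivative (\<lambda>t. t *\<^sub>R (g v - g a))) (at v within {a..b})"
      unfolding has_vector_derivative_def .
    show "onorm (\<lambda>t. t *\<^sub>R (g v - g a)) \<le> \<epsilon>"
    proof (rule onorm_le)
      fix t :: real
      have "norm (g v - g a) \<le> \<epsilon>" using e v by blast
      then have "\<bar>t\<bar> * norm (g v - g a) \<le> \<bar>t\<bar> * \<epsilon>" by (intro mult_left_mono) auto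
      then show "norm (t *\<^sub>R (g v - g a)) \<le> \<epsilon> * norm t" by (simp add: mult.commute)
    qed
  qed (use ab in auto)
  then show ?thesis using ab by (simp add: algebra_simps)
qed


lemma riemann_ev:
  fixes f g :: "real \<Rightarrow> 'a::real_normed_vector"
  assumes s: "s > 0" and d: "\<forall>v\<in>{0..s}. (f has_vector_derivative g v) (at v within {0..s})"
    and gc: "continuous_on {0..s} g" and y: "y < norm (f s - f 0)^2"
  shows "eventually (\<lambda>n. y < s^2 / real n * (\<Sum>i<n. norm (g (s * real i / real n))^2)) sequentially"
proof (cases "y < 0")
  case True
  have "0 \<le> s^2 / real n * (\<Sum>i<n. norm (g (s * real i / real n))^2)" for n
    by (intro mult_nonneg_nonneg sum_nonneg) auto
  then show ?thesis using True by (intro always_eventually allI) (meson less_le_trans)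
next
  case False
  define dd where "dd = norm (f s - f 0)"
  define sy where "sy = sqrt y"
  have sy0: "sy \<ge> 0" using False unfolding sy_def by simp
  have sydd: "sy < dd" unfolding sy_def dd_def using real_sqrt_less_mono[OF y] by simp
  define \<epsilon> where "\<epsilon> = (dd - sy) / (2 * s)"
  have e0: "\<epsilon> > 0" unfolding \<epsilon>_def using sydd s by simp
  have "uniformly_continuous_on {0..s} g" by (rule compact_uniformly_continuous[OF gc]) simp
  then obtain \<delta> where \<delta>: "\<delta> > 0" "\<forall>x\<in>{0..s}. \<forall>x'\<in>{0..s}. dist x' x < \<delta> \<longrightarrow> dist (g x') (g x) < \<epsilon>"
    unfolding uniformly_continuous_on_def using e0 by metis
  have "eventually (\<lambda>n. nat \<lceil>s / \<delta>\<rceil> < n) sequentially" by (rule eventually_gt_at_top)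
  then show ?thesis
  proof (rule eventually_mono)
    fix n assume n: "nat \<lceil>s / \<delta>\<rceil> < n"
    have n0: "n > 0" using n by simp
    have "s / \<delta> < real n" using n by linarith
    then have hd: "s / real n < \<delta>" using n0 \<delta>(1) by (simp add: field_simps)
    define h where "h = s / real n"
    define u where "u i = s * real i / real n" for i
    have h0: "h > 0" unfolding h_def using s n0 by simp
    have uS: "u (Suc i) - u i = h" for i unfolding u_def h_def by (simp add: algebra_simps add_divide_distrib)
    have uin: "u i \<in> {0..s}" if "i \<le> n" for i
      unfolding u_def using that s n0 by (auto simp: field_simps)
    have step: "norm (f (u (Suc i)) - f (u i)) \<le> h * norm (g (u i)) + \<epsilon> * h" if i: "i < n" for i
    proof -
      have a: "u i \<in> {0..s}" "u (Suc i) \<in> {0..s}" using uin i by auto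
      have sub: "{u i..u (Suc i)} \<subseteq> {0..s}" using a by auto
      have "norm (f (u (Suc i)) - f (u i) - (u (Suc i) - u i) *\<^sub>R g (u i)) \<le> \<epsilon> * (u (Suc i) - u i)"
      proof (rule step_bound)
        show "u i \<le> u (Suc i)" using uS h0 by (metis diff_gt_0_iff_gt less_le)
        show "\<forall>v\<in>{u i..u (Suc i)}. (f has_vector_derivative g v) (at v within {u i..u (Suc i)})"
          using d sub by (meson has_vector_derivative_within_subset subsetD)
        show "\<forall>v\<in>{u i..u (Suc i)}. norm (g v - g (u i)) \<le> \<epsilon>"
        proof
          fix v assume v: "v \<in> {u i..u (Suc i)}"
          have "dist v (u i) < \<delta>" using v uS[of i] hd unfolding h_def dist_real_def by auto
          then have "dist (g v) (g (u i)) < \<epsilon>" using \<delta>(2) a v sub by blast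
          then show "norm (g v - g (u i)) \<le> \<epsilon>" by (simp add: dist_norm)
        qed
      qed
      then have "norm (f (u (Suc i)) - f (u i) - h *\<^sub>R g (u i)) \<le> \<epsilon> * h" unfolding uS .
      then show ?thesis using norm_triangle_ineq2[of "f (u (Suc i)) - f (u i)" "h *\<^sub>R g (u i)"] h0
        by simp
    qed
    have tel: "f s - f 0 = (\<Sum>i<n. f (u (Suc i)) - f (u i))"
      using sum_lessThan_telescope[of "\<lambda>i. f (u i)" n] n0 unfolding u_def by simp
    have "dd \<le> (\<Sum>i<n. norm (f (u (Suc i)) - f (u i)))" unfolding dd_def tel by (rule norm_sum)
    also have "\<dots> \<le> (\<Sum>i<n. h * norm (g (u i)) + \<epsilon> * h)" by (rule sum_mono) (rule step; simp)
    also have "\<dots> = h * (\<Sum>i<n. norm (g (u i))) + \<epsilon> * s"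
      using n0 unfolding h_def by (simp add: sum.distrib sum_distrib_left)
    finally have dd1: "dd \<le> h * (\<Sum>i<n. norm (g (u i))) + \<epsilon> * s" .
    define R where "R = s^2 / real n * (\<Sum>i<n. norm (g (s * real i / real n))^2)"
    have "(\<Sum>i<n. norm (g (u i)))^2 \<le> (\<Sum>i<n. norm (g (u i))^2) * real n"
      using sum_squared_le_sum_of_squares[of "\<lambda>i. norm (g (u i))" "{..<n}"] by simp
    then have "(h * (\<Sum>i<n. norm (g (u i))))^2 \<le> h^2 * ((\<Sum>i<n. norm (g (u i))^2) * real n)"
      by (simp add: power_mult_distrib mult_left_mono)
    also have "\<dots> = R" unfolding R_def h_def u_def using n0 by (simp add: field_simps power2_eq_square)
    finally have "h * (\<Sum>i<n. norm (g (u i))) \<le> sqrt R" by (rule real_le_rsqrt)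
    moreover have "\<epsilon> * s = (dd - sy) / 2" unfolding \<epsilon>_def using s by (simp add: field_simps)
    ultimately have "dd \<le> sqrt R + (dd - sy) / 2" using dd1 by linarith
    then have "sy < sqrt R" using sydd by (simp add: field_simps)
    then have "sqrt y < sqrt R" unfolding sy_def .
    then show "y < s^2 / real n * (\<Sum>i<n. norm (g (s * real i / real n))^2)"
      unfolding R_def by simp
  qed
qed

lemma EX_bound:
  fixes F G :: "'w \<Rightarrow> real \<Rightarrow> 'a::real_normed_vector" and M :: "'w measure"
  assumes s: "s > 0" and K: "K \<ge> 0"
    and d: "\<forall>w. \<forall>v\<in>{0..s}. (F w has_vector_derivative G w v) (at v within {0..s})"
    and gc: "\<forall>w. continuous_on {0..s} (G w)"
    and mG: "\<forall>v\<in>{0..s}. (\<lambda>w. G w v) \<in> borel_measurable M"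
    and bG: "\<forall>v\<in>{0..s}. (\<integral>\<^sup>+ w. ennreal (norm (G w v)^2) \<partial>M) \<le> ennreal K"
  shows "(\<integral>\<^sup>+ w. ennreal (norm (F w s - F w 0)^2) \<partial>M) \<le> ennreal (s^2 * K)"
proof -
  define R where "R n w = s^2 / real n * (\<Sum>i<n. norm (G w (s * real i / real n))^2)" for n w
  have pt: "ennreal (norm (F w s - F w 0)^2) \<le> liminf (\<lambda>n. ennreal (R n w))" for w
    unfolding le_Liminf_iff
  proof (intro allI impI)
    fix y :: ennreal assume y: "y < ennreal (norm (F w s - F w 0)^2)"
    then have yf: "y \<noteq> \<infinity>" by auto
    then obtain y' where y': "y = ennreal y'" "y' \<ge> 0" by (cases y) auto
    have yl: "y' < norm (F w s - F w 0)^2" using y y' by (simp add: ennreal_less_iff)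
    have "eventually (\<lambda>n. y' < R n w) sequentially"
      unfolding R_def by (rule riemann_ev[OF s _ _ yl]) (use d gc in auto)
    then show "eventually (\<lambda>n. y < ennreal (R n w)) sequentially"
      by (rule eventually_mono) (use y' in \<open>simp add: ennreal_lessI\<close>)
  qed
  have uin: "s * real i / real n \<in> {0..s}" if "i < n" for i n
    using that s by (auto simp: field_simps)
  have mR: "(\<lambda>w. ennreal (R n w)) \<in> borel_measurable M" for n
  proof -
    have "(\<lambda>w. G w (s * real i / real n)) \<in> borel_measurable M" if "i < n" for i
      using mG uin[OF that] by blast
    then show ?thesis unfolding R_def
      by (intro measurable_compose[OF _ measurable_ennreal] borel_measurable_times borel_measurable_sum
          borel_measurable_power borel_measurable_norm measurable_const) auto
  qed
  have iR: "(\<integral>\<^sup>+ w. ennreal (R n w) \<partial>M) \<le> ennreal (s^2 * K)" for n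
  proof (cases "n = 0")
    case True then show ?thesis by (simp add: R_def)
  next
    case False
    have "(\<integral>\<^sup>+ w. ennreal (R n w) \<partial>M)
        = (\<integral>\<^sup>+ w. ennreal (s^2 / real n) * (\<Sum>i<n. ennreal (norm (G w (s * real i / real n))^2)) \<partial>M)"
    proof (rule nn_integral_cong)
      fix w
      show "ennreal (R n w) = ennreal (s^2 / real n) * (\<Sum>i<n. ennreal (norm (G w (s * real i / real n))^2))"
        unfolding R_def by (subst ennreal_mult'') (auto intro: sum_nonneg)
    qed
    also have "\<dots> = ennreal (s^2 / real n) * (\<Sum>i<n. \<integral>\<^sup>+ w. ennreal (norm (G w (s * real i / real n))^2) \<partial>M)"
    proof -
      have m: "(\<lambda>w. ennreal (norm (G w (s * real i / real n))^2)) \<in> borel_measurable M" if "i < n" for i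
      proof -
        have [measurable]: "(\<lambda>w. G w (s * real i / real n)) \<in> borel_measurable M"
          using mG uin[OF that] by blast
        show ?thesis by measurable
      qed
      have ms: "(\<lambda>w. \<Sum>i<n. ennreal (norm (G w (s * real i / real n))^2)) \<in> borel_measurable M"
        by (rule borel_measurable_sum) (use m in auto)
      have "(\<integral>\<^sup>+ w. (\<Sum>i<n. ennreal (norm (G w (s * real i / real n))^2)) \<partial>M)
           = (\<Sum>i<n. \<integral>\<^sup>+ w. ennreal (norm (G w (s * real i / real n))^2) \<partial>M)"
        by (rule nn_integral_sum) (use m in auto)
      then show ?thesis by (simp only: nn_integral_cmult[OF ms])
    qed
    also have "\<dots> \<le> ennreal (s^2 / real n) * (\<Sum>i<n. ennreal K)"
      by (intro mult_left_mono sum_mono) (use bG uin in auto)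
    also have "\<dots> = ennreal (s^2 / real n) * ennreal (real n * K)"
      using K by (simp add: ennreal_mult'' ennreal_of_nat_eq_real_of_nat)
    also have "\<dots> = ennreal (s^2 / real n * (real n * K))"
      by (rule ennreal_mult''[symmetric]) (use K in simp)
    also have "s^2 / real n * (real n * K) = s^2 * K" using False by simp
    finally show ?thesis .
  qed
  have "(\<integral>\<^sup>+ w. ennreal (norm (F w s - F w 0)^2) \<partial>M) \<le> (\<integral>\<^sup>+ w. liminf (\<lambda>n. ennreal (R n w)) \<partial>M)"
    by (rule nn_integral_mono) (rule pt)
  also have "\<dots> \<le> liminf (\<lambda>n. \<integral>\<^sup>+ w. ennreal (R n w) \<partial>M)"
    by (rule nn_integral_liminf) (rule mR)
  also have "\<dots> \<le> limsup (\<lambda>n. \<integral>\<^sup>+ w. ennreal (R n w) \<partial>M)"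
    by (rule Liminf_le_Limsup) simp
  also have "\<dots> \<le> ennreal (s^2 * K)"
    by (rule Limsup_bounded) (use iR in auto)
  finally show ?thesis .
qed

lemma ennreal_div_self_le: "x / x \<le> (1::ennreal)"
proof -
  have "x = top \<or> (\<exists>r\<ge>0. x = ennreal r)" by (cases x) auto
  then show ?thesis
  proof
    assume "\<exists>r\<ge>0. x = ennreal r"
    then obtain r where r: "r \<ge> 0" "x = ennreal r" by blast
    then show ?thesis by (cases "r = 0") (auto simp: divide_ennreal)
  qed (simp add: ennreal_divide_top)
qed

lemma gauss_space_le1:
  assumes mQ: "(\<lambda>y. ennreal (exp (- Q y / 2))) \<in> borel_measurable (PiM S (\<lambda>_. lborel))"
  shows "emeasure (gaussian S Q) (space (gaussian S Q)) \<le> 1"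
proof -
  let ?N = "PiM S (\<lambda>_. lborel) :: (site \<Rightarrow> real) measure"
  let ?Z = "\<integral>\<^sup>+ z. ennreal (exp (- Q z / 2)) \<partial>?N"
  have "emeasure (gaussian S Q) (space (gaussian S Q))
      = (\<integral>\<^sup>+ y. ennreal (exp (- Q y / 2)) / ?Z * indicator (space ?N) y \<partial>?N)"
    unfolding gaussian_def by (subst emeasure_density) (use mQ in auto)
  also have "\<dots> = (\<integral>\<^sup>+ y. ennreal (exp (- Q y / 2)) / ?Z \<partial>?N)"
    by (rule nn_integral_cong) auto
  also have "\<dots> = ?Z / ?Z" by (rule nn_integral_divide[OF mQ])
  also have "\<dots> \<le> 1" by (rule ennreal_div_self_le)
  finally show ?thesis .
qed

lemma Vform_meas:
  "(\<lambda>y. Vform nb cc e (\<lambda>j. y j - mu j) / T) \<in> borel_measurable (PiM (S::site set) (\<lambda>_. lborel))"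
proof -
  have [measurable]: "(\<lambda>w::site \<Rightarrow> real. w i) \<in> borel_measurable (PiM S (\<lambda>_. lborel))" for i
    by (rule meas_coord_PiM)
  show ?thesis unfolding Vform_def by measurable
qed

lemma sq_meas:
  "(\<lambda>y. (\<Sum>j\<in>L. (y j)\<^sup>2) / (mm * T::real)) \<in> borel_measurable (PiM (S::site set) (\<lambda>_. lborel))"
  by (intro borel_measurable_divide borel_measurable_sum borel_measurable_power measurable_const meas_coord_PiM) auto

lemma bath_space_le1:
  "emeasure (bath_init nb cc e T mm mu) (space (bath_init nb cc e T mm mu)) \<le> 1"
proof -
  let ?M1 = "gaussian (lattice nb) (\<lambda>y. Vform nb cc e (\<lambda>j. y j - mu j) / T)"
  let ?M2 = "gaussian (lattice nb) (\<lambda>y. (\<Sum>j\<in>lattice nb. (y j)\<^sup>2) / (mm * T))"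
  have m1: "emeasure ?M1 (space ?M1) \<le> 1"
    by (rule gauss_space_le1) (use Vform_meas in measurable)
  have m2: "emeasure ?M2 (space ?M2) \<le> 1"
    by (rule gauss_space_le1) (use sq_meas in measurable)
  have "finite_measure ?M2" by (rule finite_measureI) (use m2 in \<open>auto simp: top_unique\<close>)
  then interpret sigma_finite_measure ?M2 by (simp add: finite_measure.axioms(1))
  have "emeasure (bath_init nb cc e T mm mu) (space (bath_init nb cc e T mm mu))
      = emeasure (?M1 \<Otimes>\<^sub>M ?M2) (space ?M1 \<times> space ?M2)"
    unfolding bath_init_def by (simp add: space_pair_measure)
  also have "\<dots> = emeasure ?M1 (space ?M1) * emeasure ?M2 (space ?M2)"
    by (rule emeasure_pair_measure_Times) auto
  also have "\<dots> \<le> 1 * 1" by (intro mult_mono m1 m2) auto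
  finally show ?thesis by simp
qed

lemma cont_Fvec:
  fixes Xw :: "'w::topological_space \<Rightarrow> real ^ 'N::finite" and xw :: "'w \<Rightarrow> site \<Rightarrow> real"
  assumes k: "k \<ge> 1" and cX: "continuous_on UNIV Xw"
    and cx: "\<forall>i\<in>lattice (2*k). continuous_on UNIV (\<lambda>w. xw w i)"
    and cD: "\<forall>u. continuous_on UNIV (\<lambda>Y. Dl Y u)"
  shows "continuous_on UNIV (\<lambda>w. Fvec (2*k) cc e Dl a0 Da (Xw w) (xw w))"
proof -
  have cY: "continuous_on UNIV (\<lambda>w. Ycoord a0 Da (Xw w) (xw w) i)" if "i \<in> lattice (2*k)" for i
    unfolding Ycoord_def using cx that by (intro continuous_intros cX) auto
  have cV: "continuous_on UNIV (\<lambda>w. Vop (2*k) cc e (Ycoord a0 Da (Xw w) (xw w)) j)" if j: "j \<in> lattice (2*k)" for j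
    unfolding Vop_def
    by (intro continuous_intros cY j shift_in[OF k j])
  have cDl: "continuous_on UNIV (\<lambda>w. Dl (Xw w) u)" for u
    by (rule continuous_on_compose2[OF cD[rule_format] cX]) auto
  show ?thesis unfolding Fvec_def
    by (intro continuous_intros cDl cV)
qed

lemma esqrt_le: "esqrt a \<le> ennreal C \<Longrightarrow> a \<le> ennreal (C^2)"
proof -
  assume h: "esqrt a \<le> ennreal C"
  have af: "a \<noteq> top" using h by (auto simp: esqrt_def top_unique)
  then obtain r where r: "r \<ge> 0" "a = ennreal r" by (cases a) auto
  have "ennreal (sqrt r) \<le> ennreal C" using h r by (simp add: esqrt_def)
  show ?thesis
  proof (cases "C \<ge> 0")
    case True
    then have "sqrt r \<le> C" using \<open>ennreal (sqrt r) \<le> ennreal C\<close> by (simp add: ennreal_le_iff)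
    then have "r \<le> C^2" using r by (metis real_sqrt_le_iff real_sqrt_unique True)
    then show ?thesis using r by (simp add: ennreal_leI)
  next
    case False
    then have "ennreal C = 0" by (simp add: ennreal_eq_0_iff)
    then have "ennreal (sqrt r) = 0" using \<open>ennreal (sqrt r) \<le> ennreal C\<close> by simp
    then have "sqrt r \<le> 0" by (simp only: ennreal_eq_0_iff)
    then have "r = 0" using r by simp
    then show ?thesis using r by simp
  qed
qed

lemma not_bot_ge: "s \<ge> (0::real) \<Longrightarrow> at s within {0..} \<noteq> bot"
  by (metis at_within_Icc_at_right atLeastAtMost_iff atLeast_iff at_le less_add_one subsetI
      trivial_limit_at_right_real bot.extremum_uniqueI order_trans)

lemma vd_eq: "(f has_vector_derivative y) (at s within {0..}) \<Longrightarrow> s \<ge> (0::real) \<Longrightarrow>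
   vector_derivative f (at s within {0..}) = y"
  by (rule vector_derivative_within[OF not_bot_ge])

lemma sq_sum_le: "(a + b)^2 \<le> 2 * a^2 + 2 * (b::real)^2"
proof -
  have "0 \<le> (a - b)^2" by simp
  then show ?thesis unfolding power2_sum power2_diff by linarith
qed

theorem lemma3p2:
  fixes X0 P0 :: "real ^ 'N::finite"
    and T m c :: real
    and eta :: "nat \<Rightarrow> real"
    and lam :: "real ^ 'N \<Rightarrow> real"
    and Dl :: "real ^ 'N \<Rightarrow> real ^ 'N \<Rightarrow> real"
    and D2l :: "real ^ 'N \<Rightarrow> real ^ 'N \<Rightarrow> real ^ 'N \<Rightarrow> real"
    and D3l :: "real ^ 'N \<Rightarrow> real ^ 'N \<Rightarrow> real ^ 'N \<Rightarrow> real ^ 'N \<Rightarrow> real"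
    and a0 :: "nat \<Rightarrow> site \<Rightarrow> real"
    and Da :: "nat \<Rightarrow> 'N \<Rightarrow> site \<Rightarrow> real"
    and lhat :: "'N \<Rightarrow> site"
    and Fbar :: "'N \<Rightarrow> site \<Rightarrow> real"
    and X P :: "nat \<Rightarrow> (site \<Rightarrow> real) \<times> (site \<Rightarrow> real) \<Rightarrow> real \<Rightarrow> real ^ 'N"
    and x p :: "nat \<Rightarrow> (site \<Rightarrow> real) \<times> (site \<Rightarrow> real) \<Rightarrow> real \<Rightarrow> site \<Rightarrow> real"
  assumes T_pos: "T > 0" and m_pos: "m > 0" and c_pos: "c > 0"
    and eta_pos: "\<forall>k\<ge>1. eta k > 0"
    and eta_lim: "eta \<longlonglongrightarrow> 0"
    and eta_lim2: "filterlim (\<lambda>k. sqrt (real ((2 * k) ^ 3)) * eta k) at_top sequentially"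
    \<comment> \<open>lambda is C^3 with bounded second and third derivatives\<close>
    and D1: "\<forall>Y. (lam has_derivative Dl Y) (at Y)"
    and D2: "\<forall>Y u. ((\<lambda>Z. Dl Z u) has_derivative D2l Y u) (at Y)"
    and D3: "\<forall>Y u v. ((\<lambda>Z. D2l Z u v) has_derivative D3l Y u v) (at Y)"
    and D3_cont: "\<forall>u v w. continuous_on UNIV (\<lambda>Z. D3l Z u v w)"
    and D2_bdd: "\<exists>B. \<forall>Y u v. \<bar>D2l Y u v\<bar> \<le> B * norm u * norm v"
    and D3_bdd: "\<exists>B. \<forall>Y u v w. \<bar>D3l Y u v w\<bar> \<le> B * norm u * norm v * norm w"
    \<comment> \<open>force derivatives F'_{l,j} = (V'' d_{X_l} a)_j: decay and limits\<close>
    and F_decay: "\<exists>B. \<forall>k\<ge>1. \<forall>l. (\<Sum>j\<in>lattice (2 * k).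
         \<bar>Vop (2 * k) c (eta k) (Da k l) j\<bar> * (1 + sitedist2 j (lhat l))) \<le> B"
    and F_lim: "\<forall>l j. (\<lambda>k. Vop (2 * k) c (eta k) (Da k l) j) \<longlonglongrightarrow> Fbar l j"
    and beta: "\<forall>l. \<exists>g :: real \<times> real \<times> real \<Rightarrow> complex.
         twice_differentiable_on g (cbox (-2*c, -2*c, -2*c) (2*c, 2*c, 2*c)) \<and>
         (\<forall>w\<in>cbox (-2*c, -2*c, -2*c) (2*c, 2*c, 2*c). norm w > c \<longrightarrow> g w = 0) \<and>
         (\<forall>r\<in>{-1/2..<1/2} \<times> {-1/2..<1/2} \<times> {-1/2..<1/2}.
            (\<Sum>\<^sub>\<infinity>j\<in>UNIV. complex_of_real (Fbar l j) * exp (- 2 * pi * \<i> * complex_of_real (dotZ j r)))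
              = g (omega c r))"
    \<comment> \<open>Hamilton equations with initial data (X0, P0, x_0, p_0) = (X0, P0, fst w, snd w)\<close>
    and ham: "\<forall>k\<ge>1. \<forall>w.
         X k w 0 = X0 \<and> P k w 0 = P0 \<and>
         (\<forall>j\<in>lattice (2 * k). x k w 0 j = fst w j \<and> p k w 0 j = snd w j) \<and>
         (\<forall>t\<ge>0.
            (X k w has_vector_derivative P k w t) (at t within {0..}) \<and>
            (P k w has_vector_derivative
               (\<chi> l. - Dl (X k w t) (axis l 1) +
                  (\<Sum>j\<in>lattice (2 * k). Da k l j *
                     Vop (2 * k) c (eta k)
                       (\<lambda>i. x k w t i - (a0 k i + (\<Sum>l'\<in>UNIV. X k w t $ l' * Da k l' i))) j)))
               (at t within {0..}) \<and>
            (\<forall>j\<in>lattice (2 * k).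
               ((\<lambda>s. x k w s j) has_real_derivative p k w t j / m) (at t within {0..}) \<and>
               ((\<lambda>s. p k w s j) has_real_derivative
                  - Vop (2 * k) c (eta k)
                      (\<lambda>i. x k w t i - (a0 k i + (\<Sum>l'\<in>UNIV. X k w t $ l' * Da k l' i))) j)
                  (at t within {0..})))"
    and hyp: "\<forall>t>0. \<exists>C. \<forall>k\<ge>1.
         (SUP s\<in>{0..t}. esqrt (\<integral>\<^sup>+ w. ennreal ((norm (vector_derivative (P k w) (at s within {0..})))\<^sup>2)
             \<partial>bath_init (2 * k) c (eta k) T m (\<lambda>i. a0 k i + (\<Sum>l\<in>UNIV. X0 $ l * Da k l i))))
       + (SUP s\<in>{0..t}. esqrt (\<integral>\<^sup>+ w. ennreal ((norm (vector_derivative (X k w) (at s within {0..})))\<^sup>2)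
             \<partial>bath_init (2 * k) c (eta k) T m (\<lambda>i. a0 k i + (\<Sum>l\<in>UNIV. X0 $ l * Da k l i))))
       \<le> ennreal C"
  shows "\<forall>t>0. \<exists>C. \<forall>k\<ge>1.
         (SUP s\<in>{0..t}. \<integral>\<^sup>+ w. ennreal ((norm (X k w s))\<^sup>2 + (norm (P k w s))\<^sup>2
               + (norm (vector_derivative (P k w) (at s within {0..})))\<^sup>2)
             \<partial>bath_init (2 * k) c (eta k) T m (\<lambda>i. a0 k i + (\<Sum>l\<in>UNIV. X0 $ l * Da k l i)))
       \<le> ennreal (C * (1 + exp (C * t ^ 4)))"
proof (intro allI impI)
  fix t :: real assume t: "t > 0"
  obtain C0 where C0: "\<forall>k\<ge>1.
         (SUP s\<in>{0..t}. esqrt (\<integral>\<^sup>+ w. ennreal ((norm (vector_derivative (P k w) (at s within {0..})))\<^sup>2)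
             \<partial>bath_init (2 * k) c (eta k) T m (\<lambda>i. a0 k i + (\<Sum>l\<in>UNIV. X0 $ l * Da k l i))))
       + (SUP s\<in>{0..t}. esqrt (\<integral>\<^sup>+ w. ennreal ((norm (vector_derivative (X k w) (at s within {0..})))\<^sup>2)
             \<partial>bath_init (2 * k) c (eta k) T m (\<lambda>i. a0 k i + (\<Sum>l\<in>UNIV. X0 $ l * Da k l i))))
       \<le> ennreal C0" using hyp t by blast
  obtain B2 where B2: "\<forall>Y u v. \<bar>D2l Y u v\<bar> \<le> B2 * norm u * norm v" using D2_bdd by blast
  have Dlip: "\<forall>Y Z u. \<bar>Dl Y u - Dl Z u\<bar> \<le> B2 * norm u * norm (Y - Z)"
    using Dl_lip[OF D2 B2] by blast
  have cD: "\<forall>u. continuous_on UNIV (\<lambda>Y. Dl Y u)"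
  proof
    fix u
    show "continuous_on UNIV (\<lambda>Y. Dl Y u)"
      by (rule continuous_at_imp_continuous_on) (use D2 has_derivative_continuous in blast)
  qed
  define K0 where "K0 = 2 * norm X0 ^ 2 + 2 * t^2 * C0^2 + 2 * C0^2"
  have K00: "K0 \<ge> 0" unfolding K0_def by simp
  show "\<exists>C. \<forall>k\<ge>1.
         (SUP s\<in>{0..t}. \<integral>\<^sup>+ w. ennreal ((norm (X k w s))\<^sup>2 + (norm (P k w s))\<^sup>2
               + (norm (vector_derivative (P k w) (at s within {0..})))\<^sup>2)
             \<partial>bath_init (2 * k) c (eta k) T m (\<lambda>i. a0 k i + (\<Sum>l\<in>UNIV. X0 $ l * Da k l i)))
       \<le> ennreal (C * (1 + exp (C * t ^ 4)))"
  proof (intro exI[of _ K0] allI impI)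
    fix k :: nat assume k: "k \<ge> 1"
    define M where "M = bath_init (2 * k) c (eta k) T m (\<lambda>i. a0 k i + (\<Sum>l\<in>UNIV. X0 $ l * Da k l i))"
    have hamk: "\<forall>w. X k w 0 = X0 \<and> P k w 0 = P0 \<and> (\<forall>j\<in>lattice (2*k). x k w 0 j = fst w j \<and> p k w 0 j = snd w j) \<and>
       (\<forall>t\<ge>0. (X k w has_vector_derivative P k w t) (at t within {0..}) \<and>
        (P k w has_vector_derivative Fvec (2*k) c (eta k) Dl (a0 k) (Da k) (X k w t) (x k w t)) (at t within {0..}) \<and>
        (\<forall>j\<in>lattice (2*k). ((\<lambda>s. x k w s j) has_real_derivative p k w t j / m) (at t within {0..}) \<and>
           ((\<lambda>s. p k w s j) has_real_derivative - Vop (2*k) c (eta k) (Ycoord (a0 k) (Da k) (X k w t) (x k w t)) j) (at t within {0..})))"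
      using ham k unfolding Fvec_def Ycoord_def by blast
    have mX: "(\<lambda>w. X k w s) \<in> borel_measurable M" if "s \<ge> 0" for s
      unfolding M_def by (rule meas_cont_bath, rule cont_sol(1)[OF k m_pos Dlip hamk that])
    have mP: "(\<lambda>w. P k w s) \<in> borel_measurable M" if "s \<ge> 0" for s
      unfolding M_def by (rule meas_cont_bath, rule cont_sol(2)[OF k m_pos Dlip hamk that])
    have mF: "(\<lambda>w. Fvec (2*k) c (eta k) Dl (a0 k) (Da k) (X k w s) (x k w s)) \<in> borel_measurable M"
      if "s \<ge> 0" for s
      unfolding M_def
      by (rule meas_cont_bath, rule cont_Fvec[OF k cont_sol(1)[OF k m_pos Dlip hamk that]
             cont_sol(3)[OF k m_pos Dlip hamk that] cD])
    have vdX: "vector_derivative (X k w) (at s within {0..}) = P k w s" if "s \<ge> 0" for w s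
      using vd_eq hamk that by blast
    have vdP: "vector_derivative (P k w) (at s within {0..}) = Fvec (2*k) c (eta k) Dl (a0 k) (Da k) (X k w s) (x k w s)"
      if "s \<ge> 0" for w s
      using vd_eq hamk that by blast
    have C0k: "(SUP s\<in>{0..t}. esqrt (\<integral>\<^sup>+ w. ennreal ((norm (vector_derivative (P k w) (at s within {0..})))\<^sup>2) \<partial>M))
       + (SUP s\<in>{0..t}. esqrt (\<integral>\<^sup>+ w. ennreal ((norm (vector_derivative (X k w) (at s within {0..})))\<^sup>2) \<partial>M))
       \<le> ennreal C0" using C0 k unfolding M_def by blast
    have EP: "(\<integral>\<^sup>+ w. ennreal ((norm (P k w s))\<^sup>2) \<partial>M) \<le> ennreal (C0^2)" if s: "s \<in> {0..t}" for s
    proof -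
      have "esqrt (\<integral>\<^sup>+ w. ennreal ((norm (vector_derivative (X k w) (at s within {0..})))\<^sup>2) \<partial>M)
          \<le> (SUP s\<in>{0..t}. esqrt (\<integral>\<^sup>+ w. ennreal ((norm (vector_derivative (X k w) (at s within {0..})))\<^sup>2) \<partial>M))"
        by (rule SUP_upper[OF s])
      also have "\<dots> \<le> ennreal C0" by (rule order_trans[OF add_increasing[OF zero_le order_refl] C0k])
      finally have "(\<integral>\<^sup>+ w. ennreal ((norm (vector_derivative (X k w) (at s within {0..})))\<^sup>2) \<partial>M) \<le> ennreal (C0^2)"
        by (rule esqrt_le)
      then show ?thesis using vdX s by simp
    qed
    have EF: "(\<integral>\<^sup>+ w. ennreal ((norm (Fvec (2*k) c (eta k) Dl (a0 k) (Da k) (X k w s) (x k w s)))\<^sup>2) \<partial>M) \<le> ennreal (C0^2)"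
      if s: "s \<in> {0..t}" for s
    proof -
      have "esqrt (\<integral>\<^sup>+ w. ennreal ((norm (vector_derivative (P k w) (at s within {0..})))\<^sup>2) \<partial>M)
          \<le> (SUP s\<in>{0..t}. esqrt (\<integral>\<^sup>+ w. ennreal ((norm (vector_derivative (P k w) (at s within {0..})))\<^sup>2) \<partial>M))"
        by (rule SUP_upper[OF s])
      also have "\<dots> \<le> ennreal C0" by (rule order_trans[OF add_increasing2[OF zero_le order_refl] C0k])
      finally have "(\<integral>\<^sup>+ w. ennreal ((norm (vector_derivative (P k w) (at s within {0..})))\<^sup>2) \<partial>M) \<le> ennreal (C0^2)"
        by (rule esqrt_le)
      then show ?thesis using vdP s by simp
    qed
    have mu1: "emeasure M (space M) \<le> 1" unfolding M_def by (rule bath_space_le1)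
    have EX: "(\<integral>\<^sup>+ w. ennreal ((norm (X k w s))\<^sup>2) \<partial>M) \<le> ennreal (2 * norm X0 ^ 2 + 2 * s^2 * C0^2)"
      if s: "s \<in> {0..t}" for s
    proof (cases "s = 0")
      case True
      have "(\<integral>\<^sup>+ w. ennreal ((norm (X k w s))\<^sup>2) \<partial>M) = ennreal ((norm X0)\<^sup>2) * emeasure M (space M)"
      proof -
        have "(\<lambda>w. ennreal ((norm (X k w s))\<^sup>2)) = (\<lambda>w. ennreal ((norm X0)\<^sup>2))" using True hamk by auto
        then show ?thesis by simp
      qed
      also have "\<dots> \<le> ennreal ((norm X0)\<^sup>2) * 1" by (intro mult_left_mono mu1) auto
      also have "\<dots> \<le> ennreal (2 * norm X0 ^ 2 + 2 * s^2 * C0^2)"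
        by (simp only: mult_1_right, rule ennreal_leI) simp
      finally show ?thesis .
    next
      case False
      then have s0: "s > 0" using s by auto
      have dX: "\<forall>w. \<forall>v\<in>{0..s}. (X k w has_vector_derivative P k w v) (at v within {0..s})"
      proof (intro allI ballI)
        fix w v assume v: "v \<in> {0..s}"
        have "(X k w has_vector_derivative P k w v) (at v within {0..})" using spec[OF hamk, of w] v by auto
        then show "(X k w has_vector_derivative P k w v) (at v within {0..s})"
          by (rule has_vector_derivative_within_subset) auto
      qed
      have gc: "\<forall>w. continuous_on {0..s} (P k w)"
      proof
        fix w
        show "continuous_on {0..s} (P k w)"
        proof (rule continuous_on_vector_derivative)
          fix v assume v: "v \<in> {0..s}"
          have "(P k w has_vector_derivative Fvec (2*k) c (eta k) Dl (a0 k) (Da k) (X k w v) (x k w v)) (at v within {0..})"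
            using spec[OF hamk, of w] v by auto
          then show "(P k w has_vector_derivative Fvec (2*k) c (eta k) Dl (a0 k) (Da k) (X k w v) (x k w v)) (at v within {0..s})"
            by (rule has_vector_derivative_within_subset) auto
        qed
      qed
      have bd: "(\<integral>\<^sup>+ w. ennreal (norm (X k w s - X k w 0)^2) \<partial>M) \<le> ennreal (s^2 * C0^2)"
        by (rule EX_bound[OF s0 _ dX gc]) (use mP EP s in auto)
      have pw: "ennreal ((norm (X k w s))\<^sup>2) \<le> ennreal (2 * (norm X0)^2) + ennreal 2 * ennreal (norm (X k w s - X k w 0)^2)" for w
      proof -
        have "norm (X k w s) \<le> norm X0 + norm (X k w s - X0)" by (metis norm_triangle_sub add.commute)
        then have "(norm (X k w s))^2 \<le> (norm X0 + norm (X k w s - X0))^2" by (simp add: power_mono)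
        also have "\<dots> \<le> 2 * (norm X0)^2 + 2 * (norm (X k w s - X0))^2"
          by (rule sq_sum_le)
        finally have "(norm (X k w s))^2 \<le> 2 * (norm X0)^2 + 2 * (norm (X k w s - X k w 0))^2" using spec[OF hamk, of w] by simp
        then have "ennreal ((norm (X k w s))^2) \<le> ennreal (2 * (norm X0)^2 + 2 * (norm (X k w s - X k w 0))^2)"
          by (rule ennreal_leI)
        also have "\<dots> = ennreal (2 * (norm X0)^2) + ennreal 2 * ennreal (norm (X k w s - X k w 0)^2)"
          by (simp add: ennreal_mult)
        finally show ?thesis .
      qed
      have "(\<integral>\<^sup>+ w. ennreal ((norm (X k w s))\<^sup>2) \<partial>M)
          \<le> (\<integral>\<^sup>+ w. ennreal (2 * (norm X0)^2) + ennreal 2 * ennreal (norm (X k w s - X k w 0)^2) \<partial>M)"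
        by (rule nn_integral_mono) (rule pw)
      also have "\<dots> = ennreal (2 * (norm X0)^2) * emeasure M (space M) + ennreal 2 * (\<integral>\<^sup>+ w. ennreal (norm (X k w s - X k w 0)^2) \<partial>M)"
      proof -
        have m0: "(\<lambda>w. X k w 0) \<in> borel_measurable M" by (rule mX) simp
        have ms: "(\<lambda>w. X k w s) \<in> borel_measurable M" by (rule mX) (use s in simp)
        have m: "(\<lambda>w. ennreal (norm (X k w s - X k w 0)^2)) \<in> borel_measurable M"
          using m0 ms by measurable
        show ?thesis by (subst nn_integral_add) (use m in \<open>auto simp: nn_integral_cmult\<close>)
      qed
      also have "\<dots> \<le> ennreal (2 * (norm X0)^2) * 1 + ennreal 2 * ennreal (s^2 * C0^2)"
        by (intro add_mono mult_left_mono mu1 bd) auto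
      also have "\<dots> = ennreal (2 * (norm X0)^2 + 2 * (s^2 * C0^2))" by (simp add: ennreal_mult)
      also have "\<dots> = ennreal (2 * norm X0 ^ 2 + 2 * s^2 * C0^2)" by (simp add: mult.assoc)
      finally show ?thesis .
    qed
    have each: "(\<integral>\<^sup>+ w. ennreal ((norm (X k w s))\<^sup>2 + (norm (P k w s))\<^sup>2
               + (norm (vector_derivative (P k w) (at s within {0..})))\<^sup>2) \<partial>M) \<le> ennreal K0"
      if s: "s \<in> {0..t}" for s
    proof -
      have s0: "s \<ge> 0" using s by simp
      have "(\<integral>\<^sup>+ w. ennreal ((norm (X k w s))\<^sup>2 + (norm (P k w s))\<^sup>2
               + (norm (vector_derivative (P k w) (at s within {0..})))\<^sup>2) \<partial>M)
          = (\<integral>\<^sup>+ w. ennreal ((norm (X k w s))\<^sup>2) + ennreal ((norm (P k w s))\<^sup>2)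
               + ennreal ((norm (Fvec (2*k) c (eta k) Dl (a0 k) (Da k) (X k w s) (x k w s)))\<^sup>2) \<partial>M)"
        by (rule nn_integral_cong) (simp add: vdP[OF s0] ennreal_plus[symmetric] del: ennreal_plus)
      also have "\<dots> = (\<integral>\<^sup>+ w. ennreal ((norm (X k w s))\<^sup>2) \<partial>M) + (\<integral>\<^sup>+ w. ennreal ((norm (P k w s))\<^sup>2) \<partial>M)
               + (\<integral>\<^sup>+ w. ennreal ((norm (Fvec (2*k) c (eta k) Dl (a0 k) (Da k) (X k w s) (x k w s)))\<^sup>2) \<partial>M)"
      proof -
        have [measurable]: "(\<lambda>w. X k w s) \<in> borel_measurable M" "(\<lambda>w. P k w s) \<in> borel_measurable M"
          "(\<lambda>w. Fvec (2*k) c (eta k) Dl (a0 k) (Da k) (X k w s) (x k w s)) \<in> borel_measurable M"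
          using mX mP mF s0 by auto
        show ?thesis by (subst nn_integral_add, measurable, subst nn_integral_add, measurable)
      qed
      also have "\<dots> \<le> ennreal (2 * norm X0 ^ 2 + 2 * s^2 * C0^2) + ennreal (C0^2) + ennreal (C0^2)"
        by (intro add_mono EX EP EF s)
      also have "\<dots> = ennreal (2 * norm X0 ^ 2 + 2 * s^2 * C0^2 + C0^2 + C0^2)"
        by (simp add: ennreal_plus[symmetric] del: ennreal_plus)
      also have "\<dots> \<le> ennreal K0"
      proof (rule ennreal_leI)
        have "s^2 \<le> t^2" using s by (intro power_mono) auto
        then have "s^2 * C0^2 \<le> t^2 * C0^2" by (intro mult_right_mono) auto
        then show "2 * norm X0 ^ 2 + 2 * s^2 * C0^2 + C0^2 + C0^2 \<le> K0" unfolding K0_def by linarith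
      qed
      finally show ?thesis .
    qed
    have "K0 \<le> K0 * (1 + exp (K0 * t ^ 4))"
      using K00 by (simp add: algebra_simps)
    then have "ennreal K0 \<le> ennreal (K0 * (1 + exp (K0 * t ^ 4)))" by (rule ennreal_leI)
    moreover have "(SUP s\<in>{0..t}. \<integral>\<^sup>+ w. ennreal ((norm (X k w s))\<^sup>2 + (norm (P k w s))\<^sup>2
               + (norm (vector_derivative (P k w) (at s within {0..})))\<^sup>2) \<partial>M) \<le> ennreal K0"
      by (rule SUP_least) (rule each)
    ultimately show "(SUP s\<in>{0..t}. \<integral>\<^sup>+ w. ennreal ((norm (X k w s))\<^sup>2 + (norm (P k w s))\<^sup>2
               + (norm (vector_derivative (P k w) (at s within {0..})))\<^sup>2)
             \<partial>bath_init (2 * k) c (eta k) T m (\<lambda>i. a0 k i + (\<Sum>l\<in>UNIV. X0 $ l * Da k l i)))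
       \<le> ennreal (K0 * (1 + exp (K0 * t ^ 4)))" unfolding M_def by (rule order_trans[rotated])
  qed
qed

end
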